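(* Let $N\ge1$ and let $f=|0,\dots,N-1|$, $g=|0,\dots,N-2,N|$ be Casoratians of $\boldsymbol\psi$ (see context), as functions of $(n,m,\alpha,\beta)$. Then (GD-4 (C-3) bilinear form) $$(p-a)\widetilde f\dot{\check f}-(p-b)f\widetilde{\dot{\check f}}-(b-a)\dot f\widetilde{\check f}=0,\qquad (q-a)\widehat f\dot{\check f}-(q-b)f\widehat{\dot{\check f}}-(b-a)\dot f\widehat{\check f}=0,$$ $$f(a\widetilde{\check f}+\widetilde{\check g})+(p-a)\widetilde f\check f-(pf+g)\widetilde{\check f}=0,\qquad f(a\widehat{\check f}+\widehat{\check g})+(q-a)\widehat f\check f-(qf+g)\widehat{\check f}=0,$$ $$\widetilde f(p\dot f+\dot g)-(p-b)f\widetilde{\dot f}-(b\widetilde f+\widetilde g)\dot f=0,\qquad \widehat f(q\dot f+\dot g)-(q-b)f\widehat{\dot f}-(b\widehat f+\widehat g)\dot f=0,$$ $$(p-b)\widetilde{\dot f}\widehat f-(q-b)\widehat{\dot f}\widetilde f-(p-q)\widehat{\widetilde f}\dot f=0,$$ $$(a\check f+\check g)\widehat{\widetilde{\dot f}}-\check f(\widehat{\widetilde{\dot g}}-b\widehat{\widetilde{\dot f}})-\frac{p_b\,\widehat{\dot f}\widetilde{\check f}}{(p-q)(p-a)}+\frac{q_b\,\widetilde{\dot f}\widehat{\check f}}{(p-q)(q-a)}+(p+q-\alpha_3)\check f\widehat{\widetilde{\dot f}}-\frac{a_b}{(p-a)(q-a)}f\widehat{\widetilde{\dot{\check f}}}=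0.$$
   Context: Fix $\alpha_1,\alpha_2,\alpha_3\in\mathbb C$, $G(\omega,k)=\omega^4-k^4+\alpha_3(\omega^3-k^3)+\alpha_2(\omega^2-k^2)+\alpha_1(\omega-k)$. Let $p,q,a,b\in\mathbb C$ be pairwise distinct, $p_b=G(-p,-b)/(p-b)$, $q_b=G(-q,-b)/(q-b)$, $a_b=G(-a,-b)/(a-b)$. Fix $N\ge1$, $k_1,\dots,k_N\in\mathbb C$; for each $s$ let $\omega_1(k_s),\dots,\omega_4(k_s)$ be the four roots in $\omega$ of $G(-\omega,-k_s)=0$, with $\omega_4(k_s)=k_s$. For constants $\rho^{(0)}_{j,s}$ let $\psi_s(n,m,\alpha,\beta,l)=\sum_{j=1}^4\rho^{(0)}_{j,s}(-\omega_j(k_s))^l(p-\omega_j(k_s))^n(q-\omega_j(k_s))^m(a-\omega_j(k_s))^\alpha(b-\omega_j(k_s))^\beta$ and $\boldsymbol\psi(l)=(\psi_1,\dots,\psi_N)^T$. Casoratian notation: $|l_1,\dots,l_N|=\det(\boldsymbol\psi(l_1),\dots,\boldsymbol\psi(l_N))$; a run "$0,\dots,j$" with $j<0$ is empty. Shifts: $\widetilde F=F(n+1,m,\alpha,\beta)$, $\widehat F=F(n,m+1,\alpha,\beta)$, $\check F=F(n,m,\alpha-1,\beta)$, $\dot F=F(n,m,\alpha,\beta+1)$, composed as needed (e.g. $\widetilde{\dot{\check f}}=f(n+1,m,\alpha-1,\beta+1)$). *)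

theory Defs
  imports Complex_Main "Jordan_Normal_Form.Determinant"
begin

definition Gdisp :: "complex \<Rightarrow> complex \<Rightarrow> complex \<Rightarrow> complex \<Rightarrow> complex \<Rightarrow> complex" where
  "Gdisp a1 a2 a3 \<omega> k =
     \<omega>^4 - k^4 + a3 * (\<omega>^3 - k^3) + a2 * (\<omega>^2 - k^2) + a1 * (\<omega> - k)"

text \<open>Entry psi_s(n,m,alpha,beta,l); s is 0-based (s = 0..N-1 corresponds to k_1..k_N),
  j ranges over 1..4; w s j is omega_j(k_s), rho s j is rho^(0)_{j,s}.\<close>
definition psiGD :: "(nat \<Rightarrow> nat \<Rightarrow> complex) \<Rightarrow> (nat \<Rightarrow> nat \<Rightarrow> complex) \<Rightarrow>
    complex \<Rightarrow> complex \<Rightarrow> complex \<Rightarrow> complex \<Rightarrow> nat \<Rightarrow> int \<Rightarrow> int \<Rightarrow> int \<Rightarrow> int \<Rightarrow> nat \<Rightarrow> complex" where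
  "psiGD rho w p q a b s n m al be l =
     (\<Sum>j\<in>{1..4}. rho s j * (- w s j) ^ l * (p - w s j) powi n * (q - w s j) powi m
        * (a - w s j) powi al * (b - w s j) powi be)"

definition casor :: "(nat \<Rightarrow> nat \<Rightarrow> complex) \<Rightarrow> (nat \<Rightarrow> nat \<Rightarrow> complex) \<Rightarrow>
    complex \<Rightarrow> complex \<Rightarrow> complex \<Rightarrow> complex \<Rightarrow> nat \<Rightarrow> nat list \<Rightarrow> int \<Rightarrow> int \<Rightarrow> int \<Rightarrow> int \<Rightarrow> complex" where
  "casor rho w p q a b N ls n m al be =
     det (mat N N (\<lambda>(s, c). psiGD rho w p q a b s n m al be (ls ! c)))"

end

theory Submission imports Defs begin

lemma bidiag_det:
  fixes Z :: "nat \<Rightarrow> nat \<Rightarrow> 'a::comm_ring_1"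
  shows "det (mat n n (\<lambda>(i,j). if j = 0 then Z i 0 else c * Z i (j-1) + Z i j))
       = det (mat n n (\<lambda>(i,j). Z i j))"
proof -
  define A where "A = mat n n (\<lambda>(i,j). Z i j)"
  define U :: "'a mat" where "U = mat n n (\<lambda>(i,j). if i = j then 1 else if Suc i = j then c else 0)"
  have AU: "mat n n (\<lambda>(i,j). if j = 0 then Z i 0 else c * Z i (j-1) + Z i j) = A * U"
  proof (rule eq_matI)
    fix i j assume i: "i < dim_row (A * U)" and j: "j < dim_col (A * U)"
    hence i': "i < n" and j': "j < n" by (auto simp: A_def U_def)
    have "(A * U) $$ (i,j) = (\<Sum>k<n. Z i k * (if k = j then 1 else if Suc k = j then c else 0))"
      using i' j' by (simp add: A_def U_def scalar_prod_def lessThan_atLeast0)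
    also have "\<dots> = (\<Sum>k<n. (if k = j then Z i k else 0) + (if Suc k = j then c * Z i k else 0))"
      by (rule sum.cong) auto
    also have "\<dots> = Z i j + (if j = 0 then 0 else c * Z i (j-1))"
    proof -
      have s1: "(\<Sum>k<n. (if k = j then Z i k else 0)) = Z i j" using j' by (simp add: sum.delta)
      have s2: "(\<Sum>k<n. (if Suc k = j then c * Z i k else 0)) = (if j = 0 then 0 else c * Z i (j-1))"
      proof (cases j)
        case 0 thus ?thesis by simp
      next
        case (Suc j0)
        have "(\<Sum>k<n. (if Suc k = j then c * Z i k else 0)) = (\<Sum>k<n. (if k = j0 then c * Z i k else 0))"
          by (rule sum.cong) (auto simp: Suc)
        also have "\<dots> = c * Z i j0" using j' Suc by (simp add: sum.delta)
        finally show ?thesis using Suc by simp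
      qed
      show ?thesis by (simp add: sum.distrib s1 s2)
    qed
    finally show "mat n n (\<lambda>(i,j). if j = 0 then Z i 0 else c * Z i (j-1) + Z i j) $$ (i,j) = (A * U) $$ (i,j)"
      using i' j' by (simp add: add.commute)
  qed (auto simp: A_def U_def)
  have dU: "det U = 1"
  proof -
    have ut: "upper_triangular U" by (auto simp: U_def upper_triangular_def)
    have "det U = prod_list (diag_mat U)" by (rule det_upper_triangular[OF ut, of n]) (simp add: U_def)
    also have "\<dots> = 1" by (simp add: prod_list_diag_prod U_def)
    finally show ?thesis .
  qed
  have "det (A * U) = det A * det U" by (rule det_mult) (auto simp: A_def U_def)
  thus ?thesis using AU dU by (simp add: A_def)
qed

locale cas =
  fixes N :: nat and phi :: "nat \<Rightarrow> nat \<Rightarrow> complex" and y :: "nat \<Rightarrow> nat \<Rightarrow> complex"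
begin

definition Vf :: "(complex \<Rightarrow> complex) \<Rightarrow> nat \<Rightarrow> complex" where
  "Vf F s = (\<Sum>j\<in>{1..4::nat}. phi s j * F (y s j))"

lemma Vf_add: "Vf (\<lambda>z. F z + G z) s = Vf F s + Vf G s"
  by (simp add: Vf_def distrib_left sum.distrib)
lemma Vf_mult: "Vf (\<lambda>z. k * F z) s = k * Vf F s"
  by (simp add: Vf_def sum_distrib_left mult_ac)
lemma Vf_shift: "Vf (\<lambda>z. T z * (c + z) * z ^ m) i = c * Vf (\<lambda>z. T z * z ^ m) i + Vf (\<lambda>z. T z * z ^ Suc m) i"
proof -
  have "(\<lambda>z. T z * (c + z) * z ^ m) = (\<lambda>z. c * (T z * z ^ m) + T z * z ^ Suc m)"
    by (rule ext) (simp add: algebra_simps)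
  thus ?thesis by (simp only: Vf_add Vf_mult)
qed
lemma Vf_zero: "Vf (\<lambda>z. 0) s = 0"
  by (simp add: Vf_def)

definition Cas :: "(nat \<Rightarrow> complex \<Rightarrow> complex) \<Rightarrow> complex" where
  "Cas G = det (mat N N (\<lambda>(s,c). Vf (G c) s))"

definition ff :: "(complex \<Rightarrow> complex) \<Rightarrow> complex" where
  "ff T = Cas (\<lambda>c z. T z * z ^ c)"
definition gg :: "(complex \<Rightarrow> complex) \<Rightarrow> complex" where
  "gg T = Cas (\<lambda>c z. T z * z ^ (if c = N - 1 then N else c))"
definition Dd :: "(complex \<Rightarrow> complex) \<Rightarrow> nat \<Rightarrow> complex" where
  "Dd T i = Cas (\<lambda>c z. T z * z ^ (if c < i then c else Suc c))"

lemma Dd_N: "Dd T N = ff T"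
  unfolding Dd_def ff_def Cas_def by (intro arg_cong[where f=det] eq_matI) auto

lemma Dd_Nm1: "N \<ge> 1 \<Longrightarrow> Dd T (N - 1) = gg T"
  unfolding Dd_def gg_def Cas_def by (intro arg_cong[where f=det] eq_matI) auto

lemma kernel:
  assumes r: "r < N"
  shows "(\<Sum>i\<le>N. (-1)^i * Dd T i * Vf (\<lambda>z. T z * z ^ i) r) = 0"
proof -
  define Z where "Z = mat (Suc N) (Suc N) (\<lambda>(i,j). if i = 0 then Vf (\<lambda>z. T z * z ^ j) r
       else Vf (\<lambda>z. T z * z ^ j) (i - 1))"
  have Zc: "Z \<in> carrier_mat (Suc N) (Suc N)" by (simp add: Z_def)
  have "det Z = 0"
    by (rule det_identical_rows[OF Zc, of 0 "Suc r"]) (use r in \<open>auto simp: Z_def intro!: eq_vecI\<close>)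
  moreover have "det Z = (\<Sum>j<Suc N. Z $$ (0,j) * cofactor Z 0 j)"
    by (rule laplace_expansion_row[OF Zc]) simp
  moreover have "\<And>j. j < Suc N \<Longrightarrow> cofactor Z 0 j = (-1)^j * Dd T j"
  proof -
    fix j assume j: "j < Suc N"
    have "mat_delete Z 0 j = mat N N (\<lambda>(s,c). Vf (\<lambda>z. T z * z ^ (if c < j then c else Suc c)) s)"
      unfolding mat_delete_def Z_def by (intro eq_matI) auto
    thus "cofactor Z 0 j = (-1)^j * Dd T j"
      unfolding cofactor_def Dd_def Cas_def by simp
  qed
  ultimately have "(\<Sum>j<Suc N. Z $$ (0,j) * ((-1)^j * Dd T j)) = 0" by simp
  moreover have "(\<Sum>j<Suc N. Z $$ (0,j) * ((-1)^j * Dd T j)) = (\<Sum>i\<le>N. (-1)^i * Dd T i * Vf (\<lambda>z. T z * z ^ i) r)"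
    by (simp add: Z_def lessThan_Suc_atMost mult_ac)
  ultimately show ?thesis by simp
qed

lemma evaluation:
  "ff (\<lambda>z. T z * (c + z)) = (\<Sum>i\<le>N. c ^ i * Dd T i)"
proof -
  define Z where "Z = (\<lambda>i j. if i = 0 then (-c) ^ j else Vf (\<lambda>z. T z * z ^ j) (i - 1))"
  define M where "M = mat (Suc N) (Suc N) (\<lambda>(i,j). Z i j)"
  define B where "B = mat (Suc N) (Suc N) (\<lambda>(i,j). if j = 0 then Z i 0 else c * Z i (j-1) + Z i j)"
  have Mc: "M \<in> carrier_mat (Suc N) (Suc N)" and Bc: "B \<in> carrier_mat (Suc N) (Suc N)"
    by (simp_all add: M_def B_def)
  have eq: "det B = det M" unfolding B_def M_def by (rule bidiag_det)
  have "det M = (\<Sum>j<Suc N. M $$ (0,j) * cofactor M 0 j)"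
    by (rule laplace_expansion_row[OF Mc]) simp
  also have "\<dots> = (\<Sum>j<Suc N. c ^ j * Dd T j)"
  proof (rule sum.cong[OF refl])
    fix j assume j: "j \<in> {..<Suc N}"
    have "mat_delete M 0 j = mat N N (\<lambda>(s,cc). Vf (\<lambda>z. T z * z ^ (if cc < j then cc else Suc cc)) s)"
      unfolding mat_delete_def M_def Z_def by (intro eq_matI) auto
    hence "cofactor M 0 j = (-1)^j * Dd T j"
      unfolding cofactor_def Dd_def Cas_def by simp
    moreover have "M $$ (0,j) = (-c)^j" using j by (simp add: M_def Z_def)
    ultimately show "M $$ (0,j) * cofactor M 0 j = c ^ j * Dd T j"
      by (simp add: power_mult_distrib[symmetric])
  qed
  finally have dM: "det M = (\<Sum>i\<le>N. c ^ i * Dd T i)" by (simp add: lessThan_Suc_atMost)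
  have "det B = (\<Sum>j<Suc N. B $$ (0,j) * cofactor B 0 j)"
    by (rule laplace_expansion_row[OF Bc]) simp
  also have "\<dots> = (\<Sum>j<Suc N. (if j = 0 then cofactor B 0 0 else 0))"
  proof (rule sum.cong[OF refl])
    fix j assume j: "j \<in> {..<Suc N}"
    show "B $$ (0,j) * cofactor B 0 j = (if j = 0 then cofactor B 0 0 else 0)"
    proof (cases j)
      case 0 thus ?thesis using j by (simp add: B_def Z_def)
    next
      case (Suc j0)
      have "c * (-c)^j0 + (-c)^(Suc j0) = 0" by simp
      thus ?thesis using j Suc by (simp add: B_def Z_def)
    qed
  qed
  also have "\<dots> = cofactor B 0 0" by simp
  also have "\<dots> = det (mat_delete B 0 0)" by (simp add: cofactor_def)
  also have "mat_delete B 0 0 = mat N N (\<lambda>(s,cc). Vf (\<lambda>z. T z * (c + z) * z ^ cc) s)"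
  proof (intro eq_matI)
    fix i j assume "i < dim_row (mat N N (\<lambda>(s,cc). Vf (\<lambda>z. T z * (c + z) * z ^ cc) s))"
      "j < dim_col (mat N N (\<lambda>(s,cc). Vf (\<lambda>z. T z * (c + z) * z ^ cc) s))"
    hence ij: "i < N" "j < N" by auto
    have "(\<lambda>z. T z * (c + z) * z ^ j) = (\<lambda>z. c * (T z * z ^ j) + T z * z ^ Suc j)"
      by (rule ext) (simp add: algebra_simps)
    hence "Vf (\<lambda>z. T z * (c + z) * z ^ j) i = c * Vf (\<lambda>z. T z * z ^ j) i + Vf (\<lambda>z. T z * z ^ Suc j) i"
      by (simp add: Vf_add Vf_mult)
    thus "mat_delete B 0 0 $$ (i, j) = mat N N (\<lambda>(s,cc). Vf (\<lambda>z. T z * (c + z) * z ^ cc) s) $$ (i, j)"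
      using ij unfolding mat_delete_def B_def Z_def by simp
  qed (auto simp: mat_delete_def B_def)
  finally have "det B = ff (\<lambda>z. T z * (c + z))" by (simp add: ff_def Cas_def)
  thus ?thesis using eq dM by simp
qed


definition Lam :: "(nat \<Rightarrow> complex \<Rightarrow> complex) \<Rightarrow> (complex \<Rightarrow> complex) \<Rightarrow> complex" where
  "Lam A F = det (mat N N (\<lambda>(s,j). if j = N - 1 then Vf F s else Vf (A j) s))"

definition wA :: "(nat \<Rightarrow> complex \<Rightarrow> complex) \<Rightarrow> nat \<Rightarrow> complex" where
  "wA A r = cofactor (mat N N (\<lambda>(s,j). if j = N - 1 then 0 else Vf (A j) s)) r (N - 1)"

lemma Lam_expand:
  assumes N: "N \<ge> 1"
  shows "Lam A F = (\<Sum>r<N. Vf F r * wA A r)"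
proof -
  define M where "M = mat N N (\<lambda>(s,j). if j = N - 1 then Vf F s else Vf (A j) s)"
  have Mc: "M \<in> carrier_mat N N" by (simp add: M_def)
  have "det M = (\<Sum>i<N. M $$ (i, N-1) * cofactor M i (N-1))"
    by (rule laplace_expansion_column[OF Mc]) (use N in simp)
  also have "\<dots> = (\<Sum>r<N. Vf F r * wA A r)"
  proof (rule sum.cong[OF refl])
    fix i assume i: "i \<in> {..<N}"
    have "mat_delete M i (N-1) = mat_delete (mat N N (\<lambda>(s,j). if j = N - 1 then 0 else Vf (A j) s)) i (N - 1)"
      unfolding mat_delete_def M_def by (intro eq_matI) auto
    thus "M $$ (i, N-1) * cofactor M i (N-1) = Vf F i * wA A i"
      using i N by (simp add: M_def wA_def cofactor_def)
  qed
  finally show ?thesis by (simp add: M_def Lam_def)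
qed

lemma Lam_add: "N \<ge> 1 \<Longrightarrow> Lam A (\<lambda>z. F z + G z) = Lam A F + Lam A G"
  by (simp add: Lam_expand Vf_add distrib_right sum.distrib)
lemma Lam_mult: "N \<ge> 1 \<Longrightarrow> Lam A (\<lambda>z. k * F z) = k * Lam A F"
  by (simp add: Lam_expand Vf_mult sum_distrib_left mult_ac)
lemma Vf_diff: "Vf (\<lambda>z. F z - G z) s = Vf F s - Vf G s"
  by (simp add: Vf_def right_diff_distrib sum_subtractf)
lemma Lam_diff: "N \<ge> 1 \<Longrightarrow> Lam A (\<lambda>z. F z - G z) = Lam A F - Lam A G"
  by (simp add: Lam_expand Vf_diff left_diff_distrib sum_subtractf)

lemma Lam_A:
  assumes "j + 2 \<le> N"
  shows "Lam A (A j) = 0"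
proof -
  define M where "M = mat N N (\<lambda>(s,j). if j = N - 1 then Vf (A j) s else Vf (A j) s)"
  have "det (mat N N (\<lambda>(s,jj). if jj = N - 1 then Vf (A j) s else Vf (A jj) s)) = 0"
    by (rule det_identical_columns[of _ N j "N - 1"]) (use assms in \<open>auto intro!: eq_vecI\<close>)
  thus ?thesis by (simp add: Lam_def)
qed

lemma Lam_ff:
  assumes "\<And>j. A j = (\<lambda>z. Q z * z ^ j)"
  shows "Lam A (\<lambda>z. Q z * z ^ (N - 1)) = ff Q"
  unfolding Lam_def ff_def Cas_def assms by (intro arg_cong[where f=det] eq_matI) auto

lemma Lam_gg:
  assumes "\<And>j. A j = (\<lambda>z. Q z * z ^ j)"
  shows "Lam A (\<lambda>z. Q z * z ^ N) = gg Q"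
  unfolding Lam_def gg_def Cas_def assms by (intro arg_cong[where f=det] eq_matI) auto

lemma Lam_rot:
  assumes N: "N \<ge> 1" and A: "\<And>j. A j = (\<lambda>z. T z * (c + z) * z ^ j)"
  shows "Lam A T = (-1) ^ (N - 1) * ff T"
proof -
  define M where "M = mat N N (\<lambda>(s,j). if j = N - 1 then Vf T s else Vf (A j) s)"
  have Mc: "M \<in> carrier_mat N N" by (simp add: M_def)
  have sw: "swap_col_to_front M (N-1) = mat N N (\<lambda>(i,j). if j = 0 then Vf (\<lambda>z. T z * z ^ 0) i
       else c * Vf (\<lambda>z. T z * z ^ (j - 1)) i + Vf (\<lambda>z. T z * z ^ j) i)"
  proof -
    have "swap_col_to_front M (N-1) = mat N N (\<lambda> (i,j). if j = 0 then M $$ (i,N-1)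
       else if j \<le> N-1 then M $$ (i, j-1) else M $$ (i,j))"
      by (rule swap_col_to_front_result[OF Mc]) (use N in simp)
    also have "\<dots> = mat N N (\<lambda>(i,j). if j = 0 then Vf (\<lambda>z. T z * z ^ 0) i
       else c * Vf (\<lambda>z. T z * z ^ (j - 1)) i + Vf (\<lambda>z. T z * z ^ j) i)"
    proof (intro eq_matI)
      fix i j assume "i < dim_row (mat N N (\<lambda>(i,j). if j = 0 then Vf (\<lambda>z. T z * z ^ 0) i
       else c * Vf (\<lambda>z. T z * z ^ (j - 1)) i + Vf (\<lambda>z. T z * z ^ j) i))"
       "j < dim_col (mat N N (\<lambda>(i,j). if j = 0 then Vf (\<lambda>z. T z * z ^ 0) i
       else c * Vf (\<lambda>z. T z * z ^ (j - 1)) i + Vf (\<lambda>z. T z * z ^ j) i))"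
      hence ij: "i < N" "j < N" by auto
      show "mat N N (\<lambda> (i,j). if j = 0 then M $$ (i,N-1)
       else if j \<le> N-1 then M $$ (i, j-1) else M $$ (i,j)) $$ (i,j) = mat N N (\<lambda>(i,j). if j = 0 then Vf (\<lambda>z. T z * z ^ 0) i
       else c * Vf (\<lambda>z. T z * z ^ (j - 1)) i + Vf (\<lambda>z. T z * z ^ j) i) $$ (i,j)"
      proof (cases j)
        case 0 thus ?thesis using ij by (simp add: M_def)
      next
        case (Suc j0)
        have jj: "j \<le> N - 1" "j \<noteq> 0" "j - 1 \<noteq> N - 1" "j - 1 = j0" using ij Suc by auto
        have "Vf (A j0) i = c * Vf (\<lambda>z. T z * z ^ j0) i + Vf (\<lambda>z. T z * z ^ j) i"
          unfolding A Suc by (rule Vf_shift)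
        thus ?thesis using ij jj by (simp add: M_def)
      qed
    qed auto
    finally show ?thesis .
  qed
  have "det (swap_col_to_front M (N-1)) = (-1)^(N-1) * det M"
    by (rule swap_col_to_front_det[OF Mc]) (use N in simp)
  moreover have "det (swap_col_to_front M (N-1)) = ff T"
    unfolding sw ff_def Cas_def
    by (rule bidiag_det[where Z = "\<lambda>i j. Vf (\<lambda>z. T z * z ^ j) i"])
  ultimately have "ff T = (-1)^(N-1) * Lam A T" by (simp add: M_def Lam_def)
  hence "(-1)^(N-1) * ff T = ((-1)^(N-1) * (-1)^(N-1)) * Lam A T" by (simp add: mult_ac)
  also have "(-1::complex)^(N-1) * (-1)^(N-1) = 1" by (simp add: power_add[symmetric])
  finally show ?thesis by simp
qed

lemma lemmaE:
  assumes N: "N \<ge> 1" and h0: "\<And>j. j + 2 \<le> N \<Longrightarrow> Lam A (\<lambda>z. T z * (c + z) * z ^ j) = 0"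
  shows "i < N \<Longrightarrow> Lam A (\<lambda>z. T z * z ^ i) = (-c) ^ i * Lam A T"
    and "Lam A (\<lambda>z. T z * z ^ N) = Lam A (\<lambda>z. T z * (c + z) * z ^ (N - 1)) + (-c) ^ N * Lam A T"
proof -
  have step: "Lam A (\<lambda>z. T z * z ^ Suc j) = Lam A (\<lambda>z. T z * (c + z) * z ^ j) - c * Lam A (\<lambda>z. T z * z ^ j)" for j
  proof -
    have e: "(\<lambda>z. T z * z ^ Suc j) = (\<lambda>z. T z * (c + z) * z ^ j - c * (T z * z ^ j))"
      by (rule ext) (simp add: algebra_simps)
    show ?thesis unfolding e by (simp only: Lam_diff[OF N] Lam_mult[OF N])
  qed
  show i: "i < N \<Longrightarrow> Lam A (\<lambda>z. T z * z ^ i) = (-c) ^ i * Lam A T" for i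
  proof (induction i)
    case 0 thus ?case by simp
  next
    case (Suc i)
    hence z: "Lam A (\<lambda>z. T z * (c + z) * z ^ i) = 0" by (intro h0) simp
    have "Lam A (\<lambda>z. T z * z ^ Suc i) = Lam A (\<lambda>z. T z * (c + z) * z ^ i) - c * Lam A (\<lambda>z. T z * z ^ i)"
      by (rule step)
    also have "\<dots> = (-c) ^ Suc i * Lam A T" using z Suc by simp
    finally show ?case .
  qed
  have "Lam A (\<lambda>z. T z * z ^ N) = Lam A (\<lambda>z. T z * z ^ Suc (N - 1))" using N by simp
  also have "\<dots> = Lam A (\<lambda>z. T z * (c + z) * z ^ (N - 1)) - c * Lam A (\<lambda>z. T z * z ^ (N - 1))"
    by (rule step)
  also have "\<dots> = Lam A (\<lambda>z. T z * (c + z) * z ^ (N - 1)) - c * ((-c) ^ (N - 1) * Lam A T)"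
    using i[of "N - 1"] N by simp
  also have "c * ((-c) ^ (N - 1) * Lam A T) = - ((-c) ^ N * Lam A T)"
  proof -
    obtain M where NM: "N = Suc M" using N by (cases N) auto
    show ?thesis by (simp add: NM)
  qed
  finally show "Lam A (\<lambda>z. T z * z ^ N) = Lam A (\<lambda>z. T z * (c + z) * z ^ (N - 1)) + (-c) ^ N * Lam A T" by simp
qed

lemma lemmaES:
  assumes N: "N \<ge> 1" and h0: "\<And>j. j + 2 \<le> N \<Longrightarrow> Lam A (\<lambda>z. T z * (c + z) * z ^ j) = 0"
  shows "(\<Sum>i\<le>N. k i * Lam A (\<lambda>z. T z * z ^ i)) =
     (\<Sum>i\<le>N. k i * (-c) ^ i) * Lam A T + k N * Lam A (\<lambda>z. T z * (c + z) * z ^ (N - 1))"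
proof -
  have s1: "(\<Sum>i\<le>N. k i * Lam A (\<lambda>z. T z * z ^ i)) = (\<Sum>i<N. k i * Lam A (\<lambda>z. T z * z ^ i)) + k N * Lam A (\<lambda>z. T z * z ^ N)"
    by (simp add: lessThan_Suc_atMost[symmetric])
  have s2: "(\<Sum>i<N. k i * Lam A (\<lambda>z. T z * z ^ i)) = (\<Sum>i<N. k i * (-c) ^ i) * Lam A T"
    unfolding sum_distrib_right
    by (rule sum.cong[OF refl]) (simp add: lemmaE(1)[OF N h0])
  have s3: "Lam A (\<lambda>z. T z * z ^ N) = Lam A (\<lambda>z. T z * (c + z) * z ^ (N - 1)) + (-c) ^ N * Lam A T"
    by (rule lemmaE(2)[OF N h0])
  have s4: "(\<Sum>i\<le>N. k i * (-c) ^ i) = (\<Sum>i<N. k i * (-c) ^ i) + k N * (-c) ^ N"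
    by (simp add: lessThan_Suc_atMost[symmetric])
  show ?thesis unfolding s1 s2 s3 s4 by (simp only: distrib_left distrib_right mult_ac add_ac)
qed

lemma last_two:
  assumes N: "N \<ge> 1" and h0: "\<And>j. j + 2 \<le> N \<Longrightarrow> Lam A (\<lambda>z. Q z * z ^ j) = 0"
  shows "(\<Sum>i\<le>N. k i * Lam A (\<lambda>z. Q z * z ^ i)) =
     k (N - 1) * Lam A (\<lambda>z. Q z * z ^ (N - 1)) + k N * Lam A (\<lambda>z. Q z * z ^ N)"
proof -
  have e: "{..N} = insert N (insert (N - 1) {..<N - 1})" using N by auto
  have z: "(\<Sum>i<N - 1. k i * Lam A (\<lambda>z. Q z * z ^ i)) = 0"
    by (rule sum.neutral) (use h0 in auto)
  have "N \<noteq> N - 1" using N by simp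
  hence "(\<Sum>i\<in>insert N (insert (N - 1) {..<N - 1}). k i * Lam A (\<lambda>z. Q z * z ^ i)) =
     k N * Lam A (\<lambda>z. Q z * z ^ N) + (k (N - 1) * Lam A (\<lambda>z. Q z * z ^ (N - 1)) + (\<Sum>i<N - 1. k i * Lam A (\<lambda>z. Q z * z ^ i)))"
    by (simp add: sum.insert)
  thus ?thesis unfolding e z by simp
qed

lemma main_identity:
  assumes N: "N \<ge> 1" and S: "\<And>F s. s < N \<Longrightarrow> Vf (\<lambda>z. S z * F z) s = g s * Vf F s"
  shows "(\<Sum>i\<le>N. (-1)^i * Dd T i * Lam A (\<lambda>z. S z * (T z * z ^ i))) = 0"
proof -
  have "(\<Sum>i\<le>N. (-1)^i * Dd T i * Lam A (\<lambda>z. S z * (T z * z ^ i)))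
      = (\<Sum>i\<le>N. \<Sum>r<N. (-1)^i * Dd T i * (g r * Vf (\<lambda>z. T z * z ^ i) r * wA A r))"
    by (simp add: Lam_expand[OF N] S sum_distrib_left)
  also have "\<dots> = (\<Sum>r<N. g r * wA A r * (\<Sum>i\<le>N. (-1)^i * Dd T i * Vf (\<lambda>z. T z * z ^ i) r))"
    by (subst sum.swap) (simp add: sum_distrib_left mult_ac)
  also have "\<dots> = 0" by (simp add: kernel)
  finally show ?thesis .
qed

lemma Lam_cong: "(\<And>z. F z = G z) \<Longrightarrow> Lam A F = Lam A G"
  by (metis ext)
lemma ff_cong: "(\<And>z. F z = G z) \<Longrightarrow> ff F = ff G"
  by (metis ext)
lemma gg_cong: "(\<And>z. F z = G z) \<Longrightarrow> gg F = gg G"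
  by (metis ext)

lemma kappa_sum_eval: "(\<Sum>i\<le>N. (-1)^i * Dd T i * (-c) ^ i) = ff (\<lambda>z. T z * (c + z))"
proof -
  have "(\<Sum>i\<le>N. (-1)^i * Dd T i * (-c) ^ i) = (\<Sum>i\<le>N. c ^ i * Dd T i)"
  proof (rule sum.cong[OF refl])
    fix i
    have "(-1::complex)^i * (-c)^i = c ^ i" by (simp add: power_mult_distrib[symmetric])
    thus "(-1)^i * Dd T i * (-c) ^ i = c ^ i * Dd T i" by (metis mult.commute mult.left_commute)
  qed
  thus ?thesis by (simp add: evaluation)
qed

lemma lemma2:
  assumes N: "N \<ge> 1"
  shows "ff (\<lambda>z. T z * (d + z)) * (d * ff (\<lambda>z. T z * (c + z)) + gg (\<lambda>z. T z * (c + z)))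
    + (c - d) * ff (\<lambda>z. T z * (d + z) * (c + z)) * ff T
    - (c * ff (\<lambda>z. T z * (d + z)) + gg (\<lambda>z. T z * (d + z))) * ff (\<lambda>z. T z * (c + z)) = 0"
proof -
  define A where "A = (\<lambda>j z. T z * (c + z) * z ^ j)"
  define Td where "Td = (\<lambda>z. T z * (d + z))"
  define Q where "Q = (\<lambda>z. T z * (c + z))"
  define k where "k = (\<lambda>i. (-1)^i * Dd Td i)"
  have MI: "(\<Sum>i\<le>N. k i * Lam A (\<lambda>z. 1 * (Td z * z ^ i))) = 0"
    unfolding k_def by (rule main_identity[OF N, where g = "\<lambda>_. 1"]) simp
  have h0: "\<And>j. j + 2 \<le> N \<Longrightarrow> Lam A (\<lambda>z. T z * (c + z) * z ^ j) = 0"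
    using Lam_A[of _ A] by (simp add: A_def)
  have h0Q: "\<And>j. j + 2 \<le> N \<Longrightarrow> Lam A (\<lambda>z. Q z * z ^ j) = 0"
    using h0 by (simp add: Q_def)
  have split: "Lam A (\<lambda>z. 1 * (Td z * z ^ i)) = Lam A (\<lambda>z. Q z * z ^ i) + (d - c) * Lam A (\<lambda>z. T z * z ^ i)" for i
  proof -
    have "Lam A (\<lambda>z. 1 * (Td z * z ^ i)) = Lam A (\<lambda>z. Q z * z ^ i + (d - c) * (T z * z ^ i))"
      by (rule Lam_cong) (simp add: Td_def Q_def algebra_simps)
    thus ?thesis by (simp only: Lam_add[OF N] Lam_mult[OF N])
  qed
  have "0 = (\<Sum>i\<le>N. k i * Lam A (\<lambda>z. Q z * z ^ i)) + (d - c) * (\<Sum>i\<le>N. k i * Lam A (\<lambda>z. T z * z ^ i))"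
    unfolding MI[symmetric] split by (simp add: distrib_left sum.distrib sum_distrib_left mult_ac)
  also have "(\<Sum>i\<le>N. k i * Lam A (\<lambda>z. Q z * z ^ i)) = k (N - 1) * ff Q + k N * gg Q"
    using last_two[OF N h0Q, of k] Lam_ff[of A Q] Lam_gg[of A Q] by (simp add: A_def Q_def)
  also have "(\<Sum>i\<le>N. k i * Lam A (\<lambda>z. T z * z ^ i)) = (\<Sum>i\<le>N. k i * (-c) ^ i) * ((-1) ^ (N - 1) * ff T) + k N * ff Q"
    using lemmaES[OF N h0, of k] Lam_rot[OF N, of A T c] Lam_ff[of A Q] by (simp add: A_def Q_def)
  also have "(\<Sum>i\<le>N. k i * (-c) ^ i) = ff (\<lambda>z. Td z * (c + z))"
    unfolding k_def by (rule kappa_sum_eval)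
  finally have E: "0 = k (N - 1) * ff Q + k N * gg Q + (d - c) * (ff (\<lambda>z. Td z * (c + z)) * ((-1) ^ (N - 1) * ff T) + k N * ff Q)" .
  obtain M where NM: "N = Suc M" using N by (cases N) auto
  have kk: "k (N - 1) = (-1)^M * gg Td" "k N = - ((-1)^M * ff Td)"
    using Dd_Nm1[OF N, of Td] Dd_N[of Td] by (simp_all add: k_def NM)
  have p1: "(-1::complex)^(N-1) = (-1)^M" by (simp add: NM)
  have "(-1)^M * (ff Td * (d * ff Q + gg Q) + (c - d) * ff (\<lambda>z. Td z * (c + z)) * ff T
      - (c * ff Td + gg Td) * ff Q) = 0"
    using E unfolding kk p1 by (simp add: algebra_simps)
  hence "ff Td * (d * ff Q + gg Q) + (c - d) * ff (\<lambda>z. Td z * (c + z)) * ff T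
      - (c * ff Td + gg Td) * ff Q = 0" by simp
  thus ?thesis by (simp add: Td_def Q_def)
qed

lemma lemma1:
  assumes N: "N \<ge> 1"
  shows "(d - e) * ff (\<lambda>z. T z * (c + z)) * ff (\<lambda>z. T z * (e + z) * (d + z))
    + (e - c) * ff (\<lambda>z. T z * (d + z)) * ff (\<lambda>z. T z * (e + z) * (c + z))
    + (c - d) * ff (\<lambda>z. T z * (e + z)) * ff (\<lambda>z. T z * (c + z) * (d + z)) = 0"
proof -
  define A where "A = (\<lambda>j z. T z * (c + z) * (d + z) * z ^ j)"
  define Te where "Te = (\<lambda>z. T z * (e + z))"
  define Tc where "Tc = (\<lambda>z. T z * (c + z))"
  define Tdd where "Tdd = (\<lambda>z. T z * (d + z))"
  define Q where "Q = (\<lambda>z. T z * (c + z) * (d + z))"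
  define k where "k = (\<lambda>i. (-1)^i * Dd Te i)"
  have MI: "(\<Sum>i\<le>N. k i * Lam A (\<lambda>z. 1 * (Te z * z ^ i))) = 0"
    unfolding k_def by (rule main_identity[OF N, where g = "\<lambda>_. 1"]) simp
  have hc: "\<And>j. j + 2 \<le> N \<Longrightarrow> Lam A (\<lambda>z. Tc z * (d + z) * z ^ j) = 0"
    using Lam_A[of _ A] by (simp add: A_def Tc_def)
  have hd: "\<And>j. j + 2 \<le> N \<Longrightarrow> Lam A (\<lambda>z. Tdd z * (c + z) * z ^ j) = 0"
  proof -
    fix j assume j: "j + 2 \<le> N"
    have "Lam A (\<lambda>z. Tdd z * (c + z) * z ^ j) = Lam A (A j)"
      by (rule Lam_cong) (simp add: A_def Tdd_def mult_ac)
    thus "Lam A (\<lambda>z. Tdd z * (c + z) * z ^ j) = 0" using Lam_A[OF j] by simp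
  qed
  have split: "(c - d) * Lam A (\<lambda>z. 1 * (Te z * z ^ i)) = (e - d) * Lam A (\<lambda>z. Tc z * z ^ i) - (e - c) * Lam A (\<lambda>z. Tdd z * z ^ i)" for i
  proof -
    have "(c - d) * Lam A (\<lambda>z. 1 * (Te z * z ^ i)) = Lam A (\<lambda>z. (c - d) * (1 * (Te z * z ^ i)))"
      by (simp only: Lam_mult[OF N])
    also have "\<dots> = Lam A (\<lambda>z. (e - d) * (Tc z * z ^ i) - (e - c) * (Tdd z * z ^ i))"
      by (rule Lam_cong) (simp add: Te_def Tc_def Tdd_def algebra_simps)
    also have "\<dots> = (e - d) * Lam A (\<lambda>z. Tc z * z ^ i) - (e - c) * Lam A (\<lambda>z. Tdd z * z ^ i)"
      by (simp only: Lam_diff[OF N] Lam_mult[OF N])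
    finally show ?thesis .
  qed
  have "0 = (c - d) * (\<Sum>i\<le>N. k i * Lam A (\<lambda>z. 1 * (Te z * z ^ i)))" using MI by simp
  also have "\<dots> = (e - d) * (\<Sum>i\<le>N. k i * Lam A (\<lambda>z. Tc z * z ^ i)) - (e - c) * (\<Sum>i\<le>N. k i * Lam A (\<lambda>z. Tdd z * z ^ i))"
  proof -
    have "(c - d) * (\<Sum>i\<le>N. k i * Lam A (\<lambda>z. 1 * (Te z * z ^ i))) = (\<Sum>i\<le>N. k i * ((c - d) * Lam A (\<lambda>z. 1 * (Te z * z ^ i))))"
      by (simp add: sum_distrib_left mult_ac)
    also have "\<dots> = (\<Sum>i\<le>N. (e - d) * (k i * Lam A (\<lambda>z. Tc z * z ^ i)) - (e - c) * (k i * Lam A (\<lambda>z. Tdd z * z ^ i)))"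
      unfolding split by (simp add: algebra_simps)
    finally show ?thesis by (simp add: sum_subtractf sum_distrib_left)
  qed
  also have "(\<Sum>i\<le>N. k i * Lam A (\<lambda>z. Tc z * z ^ i)) = ff (\<lambda>z. Te z * (d + z)) * ((-1) ^ (N - 1) * ff Tc) + k N * ff Q"
  proof -
    have r: "Lam A Tc = (-1) ^ (N - 1) * ff Tc"
      by (rule Lam_rot[OF N]) (simp add: A_def Tc_def)
    have f: "Lam A (\<lambda>z. Tc z * (d + z) * z ^ (N - 1)) = ff Q"
      using Lam_ff[of A Q] by (simp add: A_def Q_def Tc_def)
    show ?thesis using lemmaES[OF N hc, of k] r f kappa_sum_eval[of Te d] by (simp add: k_def)
  qed
  also have "(\<Sum>i\<le>N. k i * Lam A (\<lambda>z. Tdd z * z ^ i)) = ff (\<lambda>z. Te z * (c + z)) * ((-1) ^ (N - 1) * ff Tdd) + k N * ff Q"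
  proof -
    have r: "Lam A Tdd = (-1) ^ (N - 1) * ff Tdd"
      by (rule Lam_rot[OF N]) (simp add: A_def Tdd_def mult_ac)
    have f: "Lam A (\<lambda>z. Tdd z * (c + z) * z ^ (N - 1)) = ff Q"
    proof -
      have "Lam A (\<lambda>z. Tdd z * (c + z) * z ^ (N - 1)) = Lam A (\<lambda>z. Q z * z ^ (N - 1))"
        by (rule Lam_cong) (simp add: Q_def Tdd_def mult_ac)
      thus ?thesis using Lam_ff[of A Q] by (simp add: A_def Q_def)
    qed
    show ?thesis using lemmaES[OF N hd, of k] r f kappa_sum_eval[of Te c] by (simp add: k_def)
  qed
  finally have E: "0 = (e - d) * (ff (\<lambda>z. Te z * (d + z)) * ((-1) ^ (N - 1) * ff Tc) + k N * ff Q)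
     - (e - c) * (ff (\<lambda>z. Te z * (c + z)) * ((-1) ^ (N - 1) * ff Tdd) + k N * ff Q)" .
  obtain M where NM: "N = Suc M" using N by (cases N) auto
  have kk: "k N = - ((-1)^M * ff Te)"
    using Dd_N[of Te] by (simp add: k_def NM)
  have p1: "(-1::complex)^(N-1) = (-1)^M" by (simp add: NM)
  have "(-1)^M * ((d - e) * ff Tc * ff (\<lambda>z. Te z * (d + z)) + (e - c) * ff Tdd * ff (\<lambda>z. Te z * (c + z))
     + (c - d) * ff Te * ff Q) = 0"
    using E unfolding kk p1 by (simp add: algebra_simps)
  hence "(d - e) * ff Tc * ff (\<lambda>z. Te z * (d + z)) + (e - c) * ff Tdd * ff (\<lambda>z. Te z * (c + z))
     + (c - d) * ff Te * ff Q = 0" by simp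
  thus ?thesis by (simp add: Te_def Tc_def Tdd_def Q_def)
qed

lemma lemma8:
  assumes N: "N \<ge> 1" and S: "\<And>F s. s < N \<Longrightarrow> Vf (\<lambda>z. R z * F z) s = g s * Vf F s"
    and PP: "\<And>z. PP z = (p + z) * (q + z) * (a + z) * (b + z)"
    and Mp: "\<And>z. Mp z = (q + z) * (a + z) * (b + z)"
    and Mq: "\<And>z. Mq z = (p + z) * (a + z) * (b + z)"
    and Ma: "\<And>z. Ma z = (p + z) * (q + z) * (b + z)"
    and Rdef: "\<And>z. R z = PP z + bp * Mp z + bq * Mq z + ba * Ma z"
  shows "gg (\<lambda>z. 1) * ff PP - ff (\<lambda>z. 1) * gg PP + bp * ff (\<lambda>z. 1 * (p + z)) * ff Mp
    + bq * ff (\<lambda>z. 1 * (q + z)) * ff Mq + ba * ff (\<lambda>z. 1 * (a + z)) * ff Ma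
    - (bp + bq + ba) * ff (\<lambda>z. 1) * ff PP = 0"
proof -
  define A where "A = (\<lambda>j z. PP z * z ^ j)"
  define T1 :: "complex \<Rightarrow> complex" where "T1 = (\<lambda>z. 1)"
  define k where "k = (\<lambda>i. (-1)^i * Dd T1 i)"
  have MI: "(\<Sum>i\<le>N. k i * Lam A (\<lambda>z. R z * (T1 z * z ^ i))) = 0"
    unfolding k_def by (rule main_identity[OF N S])
  have dec: "Lam A (\<lambda>z. R z * (T1 z * z ^ i)) = Lam A (\<lambda>z. PP z * z ^ i) + bp * Lam A (\<lambda>z. Mp z * z ^ i)
      + bq * Lam A (\<lambda>z. Mq z * z ^ i) + ba * Lam A (\<lambda>z. Ma z * z ^ i)" for i
  proof -
    have "Lam A (\<lambda>z. R z * (T1 z * z ^ i)) = Lam A (\<lambda>z. PP z * z ^ i + bp * (Mp z * z ^ i)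
      + bq * (Mq z * z ^ i) + ba * (Ma z * z ^ i))"
      by (rule Lam_cong) (simp add: Rdef T1_def algebra_simps)
    thus ?thesis by (simp only: Lam_add[OF N] Lam_mult[OF N])
  qed
  have h4: "\<And>j. j + 2 \<le> N \<Longrightarrow> Lam A (\<lambda>z. PP z * z ^ j) = 0"
    using Lam_A[of _ A] by (simp add: A_def)
  have s4: "(\<Sum>i\<le>N. k i * Lam A (\<lambda>z. PP z * z ^ i)) = k (N - 1) * ff PP + k N * gg PP"
    using last_two[OF N h4, of k] Lam_ff[of A PP] Lam_gg[of A PP] by (simp add: A_def)
  have gen: "(\<Sum>i\<le>N. k i * Lam A (\<lambda>z. Mc z * z ^ i)) = ff (\<lambda>z. 1 * (c + z)) * ((-1)^(N - 1) * ff Mc) + k N * ff PP"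
    if Mc: "\<And>z. Mc z * (c + z) = PP z" for Mc c
  proof -
    have h: "\<And>j. j + 2 \<le> N \<Longrightarrow> Lam A (\<lambda>z. Mc z * (c + z) * z ^ j) = 0"
      using h4 by (simp add: Mc)
    have r: "Lam A Mc = (-1) ^ (N - 1) * ff Mc"
      by (rule Lam_rot[OF N, where c = c]) (simp add: A_def Mc)
    have f: "Lam A (\<lambda>z. Mc z * (c + z) * z ^ (N - 1)) = ff PP"
      using Lam_ff[of A PP] by (simp add: A_def Mc)
    show ?thesis using lemmaES[OF N h, of k] r f kappa_sum_eval[of T1 c] by (simp add: k_def T1_def)
  qed
  have gp: "(\<Sum>i\<le>N. k i * Lam A (\<lambda>z. Mp z * z ^ i)) = ff (\<lambda>z. 1 * (p + z)) * ((-1)^(N - 1) * ff Mp) + k N * ff PP"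
    by (rule gen) (simp add: Mp PP mult_ac)
  have gq: "(\<Sum>i\<le>N. k i * Lam A (\<lambda>z. Mq z * z ^ i)) = ff (\<lambda>z. 1 * (q + z)) * ((-1)^(N - 1) * ff Mq) + k N * ff PP"
    by (rule gen) (simp add: Mq PP mult_ac)
  have ga: "(\<Sum>i\<le>N. k i * Lam A (\<lambda>z. Ma z * z ^ i)) = ff (\<lambda>z. 1 * (a + z)) * ((-1)^(N - 1) * ff Ma) + k N * ff PP"
    by (rule gen) (simp add: Ma PP mult_ac)
  have "0 = (\<Sum>i\<le>N. k i * Lam A (\<lambda>z. PP z * z ^ i)) + bp * (\<Sum>i\<le>N. k i * Lam A (\<lambda>z. Mp z * z ^ i))
     + bq * (\<Sum>i\<le>N. k i * Lam A (\<lambda>z. Mq z * z ^ i)) + ba * (\<Sum>i\<le>N. k i * Lam A (\<lambda>z. Ma z * z ^ i))"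
    unfolding MI[symmetric] dec by (simp add: distrib_left sum.distrib sum_distrib_left mult_ac)
  also note s4 also note gp also note gq also note ga
  finally have E: "0 = k (N - 1) * ff PP + k N * gg PP +
    bp * (ff (\<lambda>z. 1 * (p + z)) * ((-1)^(N - 1) * ff Mp) + k N * ff PP) +
    bq * (ff (\<lambda>z. 1 * (q + z)) * ((-1)^(N - 1) * ff Mq) + k N * ff PP) +
    ba * (ff (\<lambda>z. 1 * (a + z)) * ((-1)^(N - 1) * ff Ma) + k N * ff PP)" .
  obtain M where NM: "N = Suc M" using N by (cases N) auto
  have kk: "k (N - 1) = (-1)^M * gg T1" "k N = - ((-1)^M * ff T1)"
    using Dd_Nm1[OF N, of T1] Dd_N[of T1] by (simp_all add: k_def NM)
  have p1: "(-1::complex)^(N-1) = (-1)^M" by (simp add: NM)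
  have "(-1)^M * (gg T1 * ff PP - ff T1 * gg PP + bp * ff (\<lambda>z. 1 * (p + z)) * ff Mp
    + bq * ff (\<lambda>z. 1 * (q + z)) * ff Mq + ba * ff (\<lambda>z. 1 * (a + z)) * ff Ma
    - (bp + bq + ba) * ff T1 * ff PP) = 0"
    using E unfolding kk p1 by (simp add: algebra_simps)
  hence "gg T1 * ff PP - ff T1 * gg PP + bp * ff (\<lambda>z. 1 * (p + z)) * ff Mp
    + bq * ff (\<lambda>z. 1 * (q + z)) * ff Mq + ba * ff (\<lambda>z. 1 * (a + z)) * ff Ma
    - (bp + bq + ba) * ff T1 * ff PP = 0" by simp
  thus ?thesis by (simp add: T1_def)
qed

end

lemma powi_shift: "(x::complex) \<noteq> 0 \<Longrightarrow> x powi (e + int i) = x powi e * x ^ i"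
  by (simp add: power_int_add)

definition phiB :: "(nat \<Rightarrow> nat \<Rightarrow> complex) \<Rightarrow> (nat \<Rightarrow> nat \<Rightarrow> complex) \<Rightarrow> complex \<Rightarrow> complex \<Rightarrow> complex \<Rightarrow> complex
   \<Rightarrow> int \<Rightarrow> int \<Rightarrow> int \<Rightarrow> int \<Rightarrow> nat \<Rightarrow> nat \<Rightarrow> complex" where
  "phiB rho w p q a b n m al be s j = rho s j * (p - w s j) powi n * (q - w s j) powi m
     * (a - w s j) powi (al - 1) * (b - w s j) powi be"

lemma psi_Vf:
  assumes nz: "\<And>j. j \<in> {1..4} \<Longrightarrow> p \<noteq> w s j \<and> q \<noteq> w s j \<and> a \<noteq> w s j \<and> b \<noteq> w s j"
    and Fn: "\<And>z. Fn z = (p + z) ^ i * (q + z) ^ jj * (a + z) ^ k * (b + z) ^ t"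
  shows "psiGD rho w p q a b s (n + int i) (m + int jj) (al - 1 + int k) (be + int t) l
     = cas.Vf (phiB rho w p q a b n m al be) (\<lambda>s j. - w s j) (\<lambda>z. Fn z * z ^ l) s"
  unfolding psiGD_def cas.Vf_def
proof (rule sum.cong[OF refl])
  fix j assume j: "j \<in> {1..4::nat}"
  have a1: "p - w s j \<noteq> 0" "q - w s j \<noteq> 0" "a - w s j \<noteq> 0" "b - w s j \<noteq> 0" using nz[OF j] by auto
  show "rho s j * (- w s j) ^ l * (p - w s j) powi (n + int i) * (q - w s j) powi (m + int jj) *
         (a - w s j) powi (al - 1 + int k) * (b - w s j) powi (be + int t) =
         phiB rho w p q a b n m al be s j * (Fn (- w s j) * (- w s j) ^ l)"
    unfolding phiB_def Fn powi_shift[OF a1(1)] powi_shift[OF a1(2)] powi_shift[OF a1(3)] powi_shift[OF a1(4)]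
    by (simp add: mult_ac)
qed

lemma casor_ff:
  assumes nz: "\<And>s j. s < N \<Longrightarrow> j \<in> {1..4} \<Longrightarrow> p \<noteq> w s j \<and> q \<noteq> w s j \<and> a \<noteq> w s j \<and> b \<noteq> w s j"
    and Fn: "\<And>z. Fn z = (p + z) ^ i * (q + z) ^ jj * (a + z) ^ k * (b + z) ^ t"
  shows "casor rho w p q a b N [0..<N] (n + int i) (m + int jj) (al - 1 + int k) (be + int t)
     = cas.ff N (phiB rho w p q a b n m al be) (\<lambda>s j. - w s j) Fn"
proof -
  have E: "\<And>s l. s < N \<Longrightarrow> psiGD rho w p q a b s (n + int i) (m + int jj) (al - 1 + int k) (be + int t) l
     = cas.Vf (phiB rho w p q a b n m al be) (\<lambda>s j. - w s j) (\<lambda>z. Fn z * z ^ l) s"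
    by (rule psi_Vf) (simp_all add: nz Fn)
  show ?thesis unfolding casor_def cas.ff_def cas.Cas_def
    by (intro arg_cong[where f=det] eq_matI) (auto simp: E)
qed

lemma casor_gg:
  assumes N: "N \<ge> 1"
    and nz: "\<And>s j. s < N \<Longrightarrow> j \<in> {1..4} \<Longrightarrow> p \<noteq> w s j \<and> q \<noteq> w s j \<and> a \<noteq> w s j \<and> b \<noteq> w s j"
    and Fn: "\<And>z. Fn z = (p + z) ^ i * (q + z) ^ jj * (a + z) ^ k * (b + z) ^ t"
  shows "casor rho w p q a b N ([0..<N - 1] @ [N]) (n + int i) (m + int jj) (al - 1 + int k) (be + int t)
     = cas.gg N (phiB rho w p q a b n m al be) (\<lambda>s j. - w s j) Fn"
  unfolding casor_def cas.gg_def cas.Cas_def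
proof (intro arg_cong[where f=det] eq_matI)
  fix s c assume s: "s < dim_row (mat N N (\<lambda>(s, c). cas.Vf (phiB rho w p q a b n m al be) (\<lambda>s j. - w s j)
        (\<lambda>z. Fn z * z ^ (if c = N - 1 then N else c)) s))"
    and c: "c < dim_col (mat N N (\<lambda>(s, c). cas.Vf (phiB rho w p q a b n m al be) (\<lambda>s j. - w s j)
        (\<lambda>z. Fn z * z ^ (if c = N - 1 then N else c)) s))"
  have sc: "s < N" "c < N" using s c by auto
  have idx: "([0..<N - 1] @ [N]) ! c = (if c = N - 1 then N else c)"
    using sc N by (auto simp: nth_append)
  have E: "\<And>s l. s < N \<Longrightarrow> psiGD rho w p q a b s (n + int i) (m + int jj) (al - 1 + int k) (be + int t) l
     = cas.Vf (phiB rho w p q a b n m al be) (\<lambda>s j. - w s j) (\<lambda>z. Fn z * z ^ l) s"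
    by (rule psi_Vf) (simp_all add: nz Fn)
  show "mat N N (\<lambda>(s, c). psiGD rho w p q a b s (n + int i) (m + int jj) (al - 1 + int k) (be + int t) (([0..<N - 1] @ [N]) ! c)) $$ (s, c) =
        mat N N (\<lambda>(s, c). cas.Vf (phiB rho w p q a b n m al be) (\<lambda>s j. - w s j)
        (\<lambda>z. Fn z * z ^ (if c = N - 1 then N else c)) s) $$ (s, c)"
    using sc by (simp only: index_mat split idx E)
qed auto

definition Dp :: "complex \<Rightarrow> complex \<Rightarrow> complex \<Rightarrow> complex \<Rightarrow> complex" where
  "Dp a1 a2 a3 z = z^4 + a3 * z^3 + a2 * z^2 + a1 * z"

lemma Gdisp_Dp: "Gdisp a1 a2 a3 u v = Dp a1 a2 a3 u - Dp a1 a2 a3 v"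
  by (simp add: Gdisp_def Dp_def algebra_simps)

lemma cb_poly:
  assumes "c \<noteq> b"
  shows "Gdisp a1 a2 a3 (-c) (-b) / (c - b) = (c^3 + c^2*b + c*b^2 + b^3) - a3 * (c^2 + c*b + b^2) + a2 * (c + b) - a1"
proof -
  have "c - b \<noteq> 0" using assms by simp
  thus ?thesis by (simp add: Gdisp_def field_simps) (simp add: algebra_simps power2_eq_square power3_eq_cube power4_eq_xxxx)
qed


definition hb :: "complex \<Rightarrow> complex \<Rightarrow> complex \<Rightarrow> complex \<Rightarrow> complex \<Rightarrow> complex" where
  "hb a1 a2 a3 b c = (c^3 + c^2*b + c*b^2 + b^3) - a3 * (c^2 + c*b + b^2) + a2 * (c + b) - a1"

definition Hq :: "complex \<Rightarrow> complex \<Rightarrow> complex \<Rightarrow> complex \<Rightarrow> complex \<Rightarrow> complex" where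
  "Hq a1 a2 a3 b z = z^3 + (a3 - b) * z^2 + (a2 - a3 * b + b^2) * z + (a1 - a2 * b + a3 * b^2 - b^3)"

lemma H_lagr:
  "Hq a1 a2 a3 b z * ((p - q) * (p - a) * (q - a)) =
     (p + z) * (q + z) * (a + z) * ((p - q) * (p - a) * (q - a))
     - hb a1 a2 a3 b p * (q - a) * ((q + z) * (a + z))
     + hb a1 a2 a3 b q * (p - a) * ((p + z) * (a + z))
     - hb a1 a2 a3 b a * (p - q) * ((p + z) * (q + z))"
  unfolding Hq_def hb_def by (simp add: algebra_simps power2_eq_square power3_eq_cube)

lemma Dp_Hq: "Dp a1 a2 a3 z - Dp a1 a2 a3 (-b) = (b + z) * Hq a1 a2 a3 b z"
  unfolding Dp_def Hq_def by (simp add: algebra_simps power2_eq_square power3_eq_cube power4_eq_xxxx)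

lemma beta_poly:
  "(- hb a1 a2 a3 b p * (q - a)) + hb a1 a2 a3 b q * (p - a) - hb a1 a2 a3 b a * (p - q)
    = (a3 - (p + q + a + b)) * ((p - q) * (p - a) * (q - a))"
  unfolding hb_def by (simp add: algebra_simps power2_eq_square power3_eq_cube)

lemma R_ident:
  assumes "p \<noteq> q" "p \<noteq> a" "q \<noteq> a"
    and bp: "bp * ((p - q) * (p - a)) = - hb a1 a2 a3 b p"
    and bq: "bq * ((p - q) * (q - a)) = hb a1 a2 a3 b q"
    and ba: "ba * ((p - a) * (q - a)) = - hb a1 a2 a3 b a"
  shows "Dp a1 a2 a3 z - Dp a1 a2 a3 (-b) = (p + z) * (q + z) * (a + z) * (b + z)
     + bp * ((q + z) * (a + z) * (b + z)) + bq * ((p + z) * (a + z) * (b + z)) + ba * ((p + z) * (q + z) * (b + z))"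
proof -
  define d where "d = (p - q) * (p - a) * (q - a)"
  have d0: "d \<noteq> 0" using assms by (auto simp: d_def)
  have bpd: "bp * d = - hb a1 a2 a3 b p * (q - a)" unfolding d_def using bp by (metis mult.assoc mult_minus_left)
  have bqd: "bq * d = hb a1 a2 a3 b q * (p - a)"
  proof -
    have "bq * d = bq * ((p - q) * (q - a)) * (p - a)" unfolding d_def by (simp add: mult_ac)
    thus ?thesis using bq by simp
  qed
  have bad: "ba * d = - hb a1 a2 a3 b a * (p - q)"
  proof -
    have "ba * d = ba * ((p - a) * (q - a)) * (p - q)" unfolding d_def by (simp add: mult_ac)
    thus ?thesis using ba by simp
  qed
  have "((p + z) * (q + z) * (a + z) * (b + z)
     + bp * ((q + z) * (a + z) * (b + z)) + bq * ((p + z) * (a + z) * (b + z)) + ba * ((p + z) * (q + z) * (b + z))) * d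
     = (p + z) * (q + z) * (a + z) * (b + z) * d
     + (bp * d) * ((q + z) * (a + z) * (b + z)) + (bq * d) * ((p + z) * (a + z) * (b + z)) + (ba * d) * ((p + z) * (q + z) * (b + z))"
    by (simp add: algebra_simps)
  also have "\<dots> = (b + z) * (Hq a1 a2 a3 b z * d)"
    unfolding bpd bqd bad H_lagr[of a1 a2 a3 b z p q a, folded d_def] by (simp add: algebra_simps)
  also have "\<dots> = (Dp a1 a2 a3 z - Dp a1 a2 a3 (-b)) * d" by (simp add: Dp_Hq mult_ac)
  finally show ?thesis using d0 by simp
qed

lemma beta_sum:
  assumes "p \<noteq> q" "p \<noteq> a" "q \<noteq> a"
    and bp: "bp * ((p - q) * (p - a)) = - hb a1 a2 a3 b p"
    and bq: "bq * ((p - q) * (q - a)) = hb a1 a2 a3 b q"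
    and ba: "ba * ((p - a) * (q - a)) = - hb a1 a2 a3 b a"
  shows "bp + bq + ba = a3 - (p + q + a + b)"
proof -
  define d where "d = (p - q) * (p - a) * (q - a)"
  have d0: "d \<noteq> 0" using assms by (auto simp: d_def)
  have bpd: "bp * d = - hb a1 a2 a3 b p * (q - a)" unfolding d_def using bp by (metis mult.assoc mult_minus_left)
  have bqd: "bq * d = hb a1 a2 a3 b q * (p - a)"
  proof -
    have "bq * d = bq * ((p - q) * (q - a)) * (p - a)" unfolding d_def by (simp add: mult_ac)
    thus ?thesis using bq by simp
  qed
  have bad: "ba * d = - hb a1 a2 a3 b a * (p - q)"
  proof -
    have "ba * d = ba * ((p - a) * (q - a)) * (p - q)" unfolding d_def by (simp add: mult_ac)
    thus ?thesis using ba by simp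
  qed
  have "(bp + bq + ba) * d = (a3 - (p + q + a + b)) * d"
    unfolding distrib_right bpd bqd bad beta_poly[of a1 a2 a3 b p q a, folded d_def, symmetric] by simp
  thus ?thesis using d0 by simp
qed

theorem theorem5p1:
  fixes a1 a2 a3 p q a b :: complex
    and N :: nat
    and k :: "nat \<Rightarrow> complex"
    and w rho :: "nat \<Rightarrow> nat \<Rightarrow> complex"
    and f g :: "int \<Rightarrow> int \<Rightarrow> int \<Rightarrow> int \<Rightarrow> complex"
    and pb qb ab :: complex
    and n m al be :: int
  assumes N: "N \<ge> 1"
    and distinct: "distinct [p, q, a, b]"
    and roots: "\<And>s \<omega>. s < N \<Longrightarrow> Gdisp a1 a2 a3 (-\<omega>) (- k s) = (\<Prod>j\<in>{1..4}. (\<omega> - w s j))"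
    and w4: "\<And>s. s < N \<Longrightarrow> w s 4 = k s"
    and nonzero: "\<And>s j. s < N \<Longrightarrow> j \<in> {1..4} \<Longrightarrow>
        p \<noteq> w s j \<and> q \<noteq> w s j \<and> a \<noteq> w s j \<and> b \<noteq> w s j"
    and pb_def: "pb = Gdisp a1 a2 a3 (-p) (-b) / (p - b)"
    and qb_def: "qb = Gdisp a1 a2 a3 (-q) (-b) / (q - b)"
    and ab_def: "ab = Gdisp a1 a2 a3 (-a) (-b) / (a - b)"
    and f_def: "f = casor rho w p q a b N [0..<N]"
    and g_def: "g = casor rho w p q a b N ([0..<N - 1] @ [N])"
  shows
   "(p - a) * f (n+1) m al be * f n m (al-1) (be+1) - (p - b) * f n m al be * f (n+1) m (al-1) (be+1)
      - (b - a) * f n m al (be+1) * f (n+1) m (al-1) be = 0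
  \<and> (q - a) * f n (m+1) al be * f n m (al-1) (be+1) - (q - b) * f n m al be * f n (m+1) (al-1) (be+1)
      - (b - a) * f n m al (be+1) * f n (m+1) (al-1) be = 0
  \<and> f n m al be * (a * f (n+1) m (al-1) be + g (n+1) m (al-1) be)
      + (p - a) * f (n+1) m al be * f n m (al-1) be
      - (p * f n m al be + g n m al be) * f (n+1) m (al-1) be = 0
  \<and> f n m al be * (a * f n (m+1) (al-1) be + g n (m+1) (al-1) be)
      + (q - a) * f n (m+1) al be * f n m (al-1) be
      - (q * f n m al be + g n m al be) * f n (m+1) (al-1) be = 0
  \<and> f (n+1) m al be * (p * f n m al (be+1) + g n m al (be+1))
      - (p - b) * f n m al be * f (n+1) m al (be+1)
      - (b * f (n+1) m al be + g (n+1) m al be) * f n m al (be+1) = 0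
  \<and> f n (m+1) al be * (q * f n m al (be+1) + g n m al (be+1))
      - (q - b) * f n m al be * f n (m+1) al (be+1)
      - (b * f n (m+1) al be + g n (m+1) al be) * f n m al (be+1) = 0
  \<and> (p - b) * f (n+1) m al (be+1) * f n (m+1) al be - (q - b) * f n (m+1) al (be+1) * f (n+1) m al be
      - (p - q) * f (n+1) (m+1) al be * f n m al (be+1) = 0
  \<and> (a * f n m (al-1) be + g n m (al-1) be) * f (n+1) (m+1) al (be+1)
      - f n m (al-1) be * (g (n+1) (m+1) al (be+1) - b * f (n+1) (m+1) al (be+1))
      - pb * f n (m+1) al (be+1) * f (n+1) m (al-1) be / ((p - q) * (p - a))
      + qb * f (n+1) m al (be+1) * f n (m+1) (al-1) be / ((p - q) * (q - a))
      + (p + q - a3) * f n m (al-1) be * f (n+1) (m+1) al (be+1)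
      - ab / ((p - a) * (q - a)) * f n m al be * f (n+1) (m+1) (al-1) (be+1) = 0"
proof -
  from distinct have dd: "p \<noteq> q" "p \<noteq> a" "p \<noteq> b" "q \<noteq> a" "q \<noteq> b" "a \<noteq> b" by auto
  define PH where "PH = phiB rho w p q a b n m al be"
  define Y where "Y = (\<lambda>s j. - w s j)"
  have F: "\<And>Fn i jj kk t. (\<And>z. Fn z = (p + z) ^ i * (q + z) ^ jj * (a + z) ^ kk * (b + z) ^ t) \<Longrightarrow>
      f (n + int i) (m + int jj) (al - 1 + int kk) (be + int t) = cas.ff N PH Y Fn"
    unfolding f_def PH_def Y_def by (rule casor_ff[OF nonzero]) auto
  have G: "\<And>Fn i jj kk t. (\<And>z. Fn z = (p + z) ^ i * (q + z) ^ jj * (a + z) ^ kk * (b + z) ^ t) \<Longrightarrow>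
      g (n + int i) (m + int jj) (al - 1 + int kk) (be + int t) = cas.gg N PH Y Fn"
    unfolding g_def PH_def Y_def by (rule casor_gg[OF N nonzero]) auto
  have "(p - a) * f (n+1) m al be * f n m (al-1) (be+1) - (p - b) * f n m al be * f (n+1) m (al-1) (be+1) - (b - a) * f n m al (be+1) * f (n+1) m (al-1) be = 0"
  proof -
    note L = cas.lemma1[where N=N and phi=PH and y=Y, OF N, where T="\<lambda>z. 1" and c=p and d=a and e=b]
    have t1: "f (n+1) m al be = cas.ff N PH Y (\<lambda>z. 1 * (p + z) * (a + z))"
      using F[of "\<lambda>z. 1 * (p + z) * (a + z)" 1 0 1 0] by simp
    have t2: "f n m (al-1) (be+1) = cas.ff N PH Y (\<lambda>z. 1 * (b + z))"
      using F[of "\<lambda>z. 1 * (b + z)" 0 0 0 1] by simp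
    have t3: "f n m al be = cas.ff N PH Y (\<lambda>z. 1 * (a + z))"
      using F[of "\<lambda>z. 1 * (a + z)" 0 0 1 0] by simp
    have t4: "f (n+1) m (al-1) (be+1) = cas.ff N PH Y (\<lambda>z. 1 * (b + z) * (p + z))"
      using F[of "\<lambda>z. 1 * (b + z) * (p + z)" 1 0 0 1] by simp
    have t5: "f n m al (be+1) = cas.ff N PH Y (\<lambda>z. 1 * (b + z) * (a + z))"
      using F[of "\<lambda>z. 1 * (b + z) * (a + z)" 0 0 1 1] by simp
    have t6: "f (n+1) m (al-1) be = cas.ff N PH Y (\<lambda>z. 1 * (p + z))"
      using F[of "\<lambda>z. 1 * (p + z)" 1 0 0 0] by simp
    show ?thesis unfolding t1 t2 t3 t4 t5 t6 by (rule trans[OF _ L]) (simp add: algebra_simps)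
  qed
  moreover
  have "(q - a) * f n (m+1) al be * f n m (al-1) (be+1) - (q - b) * f n m al be * f n (m+1) (al-1) (be+1) - (b - a) * f n m al (be+1) * f n (m+1) (al-1) be = 0"
  proof -
    note L = cas.lemma1[where N=N and phi=PH and y=Y, OF N, where T="\<lambda>z. 1" and c=q and d=a and e=b]
    have t1: "f n (m+1) al be = cas.ff N PH Y (\<lambda>z. 1 * (q + z) * (a + z))"
      using F[of "\<lambda>z. 1 * (q + z) * (a + z)" 0 1 1 0] by simp
    have t2: "f n m (al-1) (be+1) = cas.ff N PH Y (\<lambda>z. 1 * (b + z))"
      using F[of "\<lambda>z. 1 * (b + z)" 0 0 0 1] by simp
    have t3: "f n m al be = cas.ff N PH Y (\<lambda>z. 1 * (a + z))"
      using F[of "\<lambda>z. 1 * (a + z)" 0 0 1 0] by simp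
    have t4: "f n (m+1) (al-1) (be+1) = cas.ff N PH Y (\<lambda>z. 1 * (b + z) * (q + z))"
      using F[of "\<lambda>z. 1 * (b + z) * (q + z)" 0 1 0 1] by simp
    have t5: "f n m al (be+1) = cas.ff N PH Y (\<lambda>z. 1 * (b + z) * (a + z))"
      using F[of "\<lambda>z. 1 * (b + z) * (a + z)" 0 0 1 1] by simp
    have t6: "f n (m+1) (al-1) be = cas.ff N PH Y (\<lambda>z. 1 * (q + z))"
      using F[of "\<lambda>z. 1 * (q + z)" 0 1 0 0] by simp
    show ?thesis unfolding t1 t2 t3 t4 t5 t6 by (rule trans[OF _ L]) (simp add: algebra_simps)
  qed
  moreover
  have "f n m al be * (a * f (n+1) m (al-1) be + g (n+1) m (al-1) be) + (p - a) * f (n+1) m al be * f n m (al-1) be - (p * f n m al be + g n m al be) * f (n+1) m (al-1) be = 0"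
  proof -
    note L = cas.lemma2[where N=N and phi=PH and y=Y, OF N, where T="\<lambda>z. 1" and c=p and d=a]
    have t1: "f n m al be = cas.ff N PH Y (\<lambda>z. 1 * (a + z))"
      using F[of "\<lambda>z. 1 * (a + z)" 0 0 1 0] by simp
    have t2: "f (n+1) m (al-1) be = cas.ff N PH Y (\<lambda>z. 1 * (p + z))"
      using F[of "\<lambda>z. 1 * (p + z)" 1 0 0 0] by simp
    have t3: "g (n+1) m (al-1) be = cas.gg N PH Y (\<lambda>z. 1 * (p + z))"
      using G[of "\<lambda>z. 1 * (p + z)" 1 0 0 0] by simp
    have t4: "f (n+1) m al be = cas.ff N PH Y (\<lambda>z. 1 * (a + z) * (p + z))"
      using F[of "\<lambda>z. 1 * (a + z) * (p + z)" 1 0 1 0] by simp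
    have t5: "f n m (al-1) be = cas.ff N PH Y (\<lambda>z. 1)"
      using F[of "\<lambda>z. 1" 0 0 0 0] by simp
    have t6: "g n m al be = cas.gg N PH Y (\<lambda>z. 1 * (a + z))"
      using G[of "\<lambda>z. 1 * (a + z)" 0 0 1 0] by simp
    show ?thesis unfolding t1 t2 t3 t4 t5 t6 by (rule trans[OF _ L]) (simp add: algebra_simps)
  qed
  moreover
  have "f n m al be * (a * f n (m+1) (al-1) be + g n (m+1) (al-1) be) + (q - a) * f n (m+1) al be * f n m (al-1) be - (q * f n m al be + g n m al be) * f n (m+1) (al-1) be = 0"
  proof -
    note L = cas.lemma2[where N=N and phi=PH and y=Y, OF N, where T="\<lambda>z. 1" and c=q and d=a]
    have t1: "f n m al be = cas.ff N PH Y (\<lambda>z. 1 * (a + z))"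
      using F[of "\<lambda>z. 1 * (a + z)" 0 0 1 0] by simp
    have t2: "f n (m+1) (al-1) be = cas.ff N PH Y (\<lambda>z. 1 * (q + z))"
      using F[of "\<lambda>z. 1 * (q + z)" 0 1 0 0] by simp
    have t3: "g n (m+1) (al-1) be = cas.gg N PH Y (\<lambda>z. 1 * (q + z))"
      using G[of "\<lambda>z. 1 * (q + z)" 0 1 0 0] by simp
    have t4: "f n (m+1) al be = cas.ff N PH Y (\<lambda>z. 1 * (a + z) * (q + z))"
      using F[of "\<lambda>z. 1 * (a + z) * (q + z)" 0 1 1 0] by simp
    have t5: "f n m (al-1) be = cas.ff N PH Y (\<lambda>z. 1)"
      using F[of "\<lambda>z. 1" 0 0 0 0] by simp
    have t6: "g n m al be = cas.gg N PH Y (\<lambda>z. 1 * (a + z))"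
      using G[of "\<lambda>z. 1 * (a + z)" 0 0 1 0] by simp
    show ?thesis unfolding t1 t2 t3 t4 t5 t6 by (rule trans[OF _ L]) (simp add: algebra_simps)
  qed
  moreover
  have "f (n+1) m al be * (p * f n m al (be+1) + g n m al (be+1)) - (p - b) * f n m al be * f (n+1) m al (be+1) - (b * f (n+1) m al be + g (n+1) m al be) * f n m al (be+1) = 0"
  proof -
    note L = cas.lemma2[where N=N and phi=PH and y=Y, OF N, where T="\<lambda>z. 1 * (a + z)" and c=b and d=p]
    have t1: "f (n+1) m al be = cas.ff N PH Y (\<lambda>z. 1 * (a + z) * (p + z))"
      using F[of "\<lambda>z. 1 * (a + z) * (p + z)" 1 0 1 0] by simp
    have t2: "f n m al (be+1) = cas.ff N PH Y (\<lambda>z. 1 * (a + z) * (b + z))"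
      using F[of "\<lambda>z. 1 * (a + z) * (b + z)" 0 0 1 1] by simp
    have t3: "g n m al (be+1) = cas.gg N PH Y (\<lambda>z. 1 * (a + z) * (b + z))"
      using G[of "\<lambda>z. 1 * (a + z) * (b + z)" 0 0 1 1] by simp
    have t4: "f n m al be = cas.ff N PH Y (\<lambda>z. 1 * (a + z))"
      using F[of "\<lambda>z. 1 * (a + z)" 0 0 1 0] by simp
    have t5: "f (n+1) m al (be+1) = cas.ff N PH Y (\<lambda>z. 1 * (a + z) * (p + z) * (b + z))"
      using F[of "\<lambda>z. 1 * (a + z) * (p + z) * (b + z)" 1 0 1 1] by simp
    have t6: "g (n+1) m al be = cas.gg N PH Y (\<lambda>z. 1 * (a + z) * (p + z))"
      using G[of "\<lambda>z. 1 * (a + z) * (p + z)" 1 0 1 0] by simp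
    show ?thesis unfolding t1 t2 t3 t4 t5 t6 by (rule trans[OF _ L]) (simp add: algebra_simps)
  qed
  moreover
  have "f n (m+1) al be * (q * f n m al (be+1) + g n m al (be+1)) - (q - b) * f n m al be * f n (m+1) al (be+1) - (b * f n (m+1) al be + g n (m+1) al be) * f n m al (be+1) = 0"
  proof -
    note L = cas.lemma2[where N=N and phi=PH and y=Y, OF N, where T="\<lambda>z. 1 * (a + z)" and c=b and d=q]
    have t1: "f n (m+1) al be = cas.ff N PH Y (\<lambda>z. 1 * (a + z) * (q + z))"
      using F[of "\<lambda>z. 1 * (a + z) * (q + z)" 0 1 1 0] by simp
    have t2: "f n m al (be+1) = cas.ff N PH Y (\<lambda>z. 1 * (a + z) * (b + z))"
      using F[of "\<lambda>z. 1 * (a + z) * (b + z)" 0 0 1 1] by simp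
    have t3: "g n m al (be+1) = cas.gg N PH Y (\<lambda>z. 1 * (a + z) * (b + z))"
      using G[of "\<lambda>z. 1 * (a + z) * (b + z)" 0 0 1 1] by simp
    have t4: "f n m al be = cas.ff N PH Y (\<lambda>z. 1 * (a + z))"
      using F[of "\<lambda>z. 1 * (a + z)" 0 0 1 0] by simp
    have t5: "f n (m+1) al (be+1) = cas.ff N PH Y (\<lambda>z. 1 * (a + z) * (q + z) * (b + z))"
      using F[of "\<lambda>z. 1 * (a + z) * (q + z) * (b + z)" 0 1 1 1] by simp
    have t6: "g n (m+1) al be = cas.gg N PH Y (\<lambda>z. 1 * (a + z) * (q + z))"
      using G[of "\<lambda>z. 1 * (a + z) * (q + z)" 0 1 1 0] by simp
    show ?thesis unfolding t1 t2 t3 t4 t5 t6 by (rule trans[OF _ L]) (simp add: algebra_simps)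
  qed
  moreover
  have "(p - b) * f (n+1) m al (be+1) * f n (m+1) al be - (q - b) * f n (m+1) al (be+1) * f (n+1) m al be - (p - q) * f (n+1) (m+1) al be * f n m al (be+1) = 0"
  proof -
    note L = cas.lemma1[where N=N and phi=PH and y=Y, OF N, where T="\<lambda>z. 1 * (a + z)" and c=p and d=b and e=q]
    have t1: "f (n+1) m al (be+1) = cas.ff N PH Y (\<lambda>z. 1 * (a + z) * (p + z) * (b + z))"
      using F[of "\<lambda>z. 1 * (a + z) * (p + z) * (b + z)" 1 0 1 1] by simp
    have t2: "f n (m+1) al be = cas.ff N PH Y (\<lambda>z. 1 * (a + z) * (q + z))"
      using F[of "\<lambda>z. 1 * (a + z) * (q + z)" 0 1 1 0] by simp
    have t3: "f n (m+1) al (be+1) = cas.ff N PH Y (\<lambda>z. 1 * (a + z) * (q + z) * (b + z))"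
      using F[of "\<lambda>z. 1 * (a + z) * (q + z) * (b + z)" 0 1 1 1] by simp
    have t4: "f (n+1) m al be = cas.ff N PH Y (\<lambda>z. 1 * (a + z) * (p + z))"
      using F[of "\<lambda>z. 1 * (a + z) * (p + z)" 1 0 1 0] by simp
    have t5: "f (n+1) (m+1) al be = cas.ff N PH Y (\<lambda>z. 1 * (a + z) * (q + z) * (p + z))"
      using F[of "\<lambda>z. 1 * (a + z) * (q + z) * (p + z)" 1 1 1 0] by simp
    have t6: "f n m al (be+1) = cas.ff N PH Y (\<lambda>z. 1 * (a + z) * (b + z))"
      using F[of "\<lambda>z. 1 * (a + z) * (b + z)" 0 0 1 1] by simp
    show ?thesis unfolding t1 t2 t3 t4 t5 t6 by (rule trans[OF _ L]) (simp add: algebra_simps)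
  qed
  moreover
  have "(a * f n m (al-1) be + g n m (al-1) be) * f (n+1) (m+1) al (be+1)
      - f n m (al-1) be * (g (n+1) (m+1) al (be+1) - b * f (n+1) (m+1) al (be+1))
      - pb * f n (m+1) al (be+1) * f (n+1) m (al-1) be / ((p - q) * (p - a))
      + qb * f (n+1) m al (be+1) * f n (m+1) (al-1) be / ((p - q) * (q - a))
      + (p + q - a3) * f n m (al-1) be * f (n+1) (m+1) al (be+1)
      - ab / ((p - a) * (q - a)) * f n m al be * f (n+1) (m+1) (al-1) (be+1) = 0"
  proof -
    define bp where "bp = - pb / ((p - q) * (p - a))"
    define bq where "bq = qb / ((p - q) * (q - a))"
    define ba where "ba = - ab / ((p - a) * (q - a))"
    have pbh: "pb = hb a1 a2 a3 b p" unfolding pb_def hb_def by (rule cb_poly[OF dd(3)])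
    have qbh: "qb = hb a1 a2 a3 b q" unfolding qb_def hb_def by (rule cb_poly[OF dd(5)])
    have abh: "ab = hb a1 a2 a3 b a" unfolding ab_def hb_def by (rule cb_poly[OF dd(6)])
    have hbp: "bp * ((p - q) * (p - a)) = - hb a1 a2 a3 b p" using dd by (simp add: bp_def pbh)
    have hbq: "bq * ((p - q) * (q - a)) = hb a1 a2 a3 b q" using dd by (simp add: bq_def qbh)
    have hba: "ba * ((p - a) * (q - a)) = - hb a1 a2 a3 b a" using dd by (simp add: ba_def abh)
    have S: "\<And>FF s. s < N \<Longrightarrow> cas.Vf PH Y (\<lambda>z. (Dp a1 a2 a3 z - Dp a1 a2 a3 (-b)) * FF z) s
        = (Dp a1 a2 a3 (- k s) - Dp a1 a2 a3 (-b)) * cas.Vf PH Y FF s"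
    proof -
      fix FF s assume s: "s < N"
      have DY: "Dp a1 a2 a3 (Y s j) = Dp a1 a2 a3 (- k s)" if j: "j \<in> {1..4::nat}" for j
      proof -
        have "Gdisp a1 a2 a3 (- w s j) (- k s) = (\<Prod>jj\<in>{1..4}. (w s j - w s jj))" by (rule roots[OF s])
        also have "\<dots> = 0" using j by (intro prod_zero) auto
        finally show ?thesis unfolding Gdisp_Dp Y_def by simp
      qed
      have "cas.Vf PH Y (\<lambda>z. (Dp a1 a2 a3 z - Dp a1 a2 a3 (-b)) * FF z) s
          = (\<Sum>j\<in>{1..4::nat}. (Dp a1 a2 a3 (- k s) - Dp a1 a2 a3 (-b)) * (PH s j * FF (Y s j)))"
        unfolding cas.Vf_def by (rule sum.cong[OF refl]) (simp add: DY mult_ac)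
      thus "cas.Vf PH Y (\<lambda>z. (Dp a1 a2 a3 z - Dp a1 a2 a3 (-b)) * FF z) s
        = (Dp a1 a2 a3 (- k s) - Dp a1 a2 a3 (-b)) * cas.Vf PH Y FF s"
        unfolding cas.Vf_def by (simp add: sum_distrib_left)
    qed
    have L: "cas.gg N PH Y (\<lambda>z. 1) * cas.ff N PH Y (\<lambda>z. (p + z) * (q + z) * (a + z) * (b + z))
      - cas.ff N PH Y (\<lambda>z. 1) * cas.gg N PH Y (\<lambda>z. (p + z) * (q + z) * (a + z) * (b + z))
      + bp * cas.ff N PH Y (\<lambda>z. 1 * (p + z)) * cas.ff N PH Y (\<lambda>z. (q + z) * (a + z) * (b + z))
      + bq * cas.ff N PH Y (\<lambda>z. 1 * (q + z)) * cas.ff N PH Y (\<lambda>z. (p + z) * (a + z) * (b + z))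
      + ba * cas.ff N PH Y (\<lambda>z. 1 * (a + z)) * cas.ff N PH Y (\<lambda>z. (p + z) * (q + z) * (b + z))
      - (bp + bq + ba) * cas.ff N PH Y (\<lambda>z. 1) * cas.ff N PH Y (\<lambda>z. (p + z) * (q + z) * (a + z) * (b + z)) = 0"
      by (rule cas.lemma8[where N=N and phi=PH and y=Y and R="\<lambda>z. Dp a1 a2 a3 z - Dp a1 a2 a3 (-b)"
          and g="\<lambda>s. Dp a1 a2 a3 (- k s) - Dp a1 a2 a3 (-b)" and p=p and q=q and a=a and b=b
          and PP="\<lambda>z. (p + z) * (q + z) * (a + z) * (b + z)" and Mp="\<lambda>z. (q + z) * (a + z) * (b + z)"
          and Mq="\<lambda>z. (p + z) * (a + z) * (b + z)" and Ma="\<lambda>z. (p + z) * (q + z) * (b + z)"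
          and bp=bp and bq=bq and ba=ba, OF N S])
         (simp_all add: R_ident[OF dd(1) dd(2) dd(4) hbp hbq hba])
    have bsum: "bp + bq + ba = a3 - (p + q + a + b)" by (rule beta_sum[OF dd(1) dd(2) dd(4) hbp hbq hba])
    have t1: "f n m (al-1) be = cas.ff N PH Y (\<lambda>z. 1)"
      using F[of "\<lambda>z. 1" 0 0 0 0] by simp
    have t2: "g n m (al-1) be = cas.gg N PH Y (\<lambda>z. 1)"
      using G[of "\<lambda>z. 1" 0 0 0 0] by simp
    have t3: "f (n+1) (m+1) al (be+1) = cas.ff N PH Y (\<lambda>z. (p + z) * (q + z) * (a + z) * (b + z))"
      using F[of "\<lambda>z. (p + z) * (q + z) * (a + z) * (b + z)" 1 1 1 1] by simp
    have t4: "g (n+1) (m+1) al (be+1) = cas.gg N PH Y (\<lambda>z. (p + z) * (q + z) * (a + z) * (b + z))"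
      using G[of "\<lambda>z. (p + z) * (q + z) * (a + z) * (b + z)" 1 1 1 1] by simp
    have t5: "f n (m+1) al (be+1) = cas.ff N PH Y (\<lambda>z. (q + z) * (a + z) * (b + z))"
      using F[of "\<lambda>z. (q + z) * (a + z) * (b + z)" 0 1 1 1] by simp
    have t6: "f (n+1) m (al-1) be = cas.ff N PH Y (\<lambda>z. 1 * (p + z))"
      using F[of "\<lambda>z. 1 * (p + z)" 1 0 0 0] by simp
    have t7: "f (n+1) m al (be+1) = cas.ff N PH Y (\<lambda>z. (p + z) * (a + z) * (b + z))"
      using F[of "\<lambda>z. (p + z) * (a + z) * (b + z)" 1 0 1 1] by simp
    have t8: "f n (m+1) (al-1) be = cas.ff N PH Y (\<lambda>z. 1 * (q + z))"
      using F[of "\<lambda>z. 1 * (q + z)" 0 1 0 0] by simp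
    have t9: "f n m al be = cas.ff N PH Y (\<lambda>z. 1 * (a + z))"
      using F[of "\<lambda>z. 1 * (a + z)" 0 0 1 0] by simp
    have t10: "f (n+1) (m+1) (al-1) (be+1) = cas.ff N PH Y (\<lambda>z. (p + z) * (q + z) * (b + z))"
      using F[of "\<lambda>z. (p + z) * (q + z) * (b + z)" 1 1 0 1] by simp
    have r1: "\<And>A B. pb * A * B / ((p - q) * (p - a)) = - (bp * B * A)" using dd by (simp add: bp_def)
    have r2: "\<And>A B. qb * A * B / ((p - q) * (q - a)) = bq * B * A" using dd by (simp add: bq_def)
    have r3: "\<And>A B. ab / ((p - a) * (q - a)) * A * B = - (ba * A * B)" using dd by (simp add: ba_def)
    have baeq: "ba = a3 - (p + q + a + b) - bp - bq" using bsum by (simp add: algebra_simps)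
    show ?thesis unfolding t1 t2 t3 t4 t5 t6 t7 t8 t9 t10 r1 r2 r3 using L unfolding baeq by (simp add: algebra_simps)
  qed
  ultimately show ?thesis by blast
qed

end
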